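(* For every nonnegative integer $n$ and complex parameters $\alpha,a$, \begin{align*} {}_3\phi_2\biggl({{q^{-n}, \alpha q^{n+1},q}\atop{q^2/a, 0}}; q, q\biggr) =q^{n^2+2n} \frac{(q, \alpha a; q)_n}{\bigl(q\alpha, q^2/a; q\bigr)_n} \Bigl(\frac{\alpha}{a}\Bigr)^n \sum_{j=0}^n \frac{\bigl(1-\alpha q^{2j}\bigr) (\alpha, q/a; q)_j (a/\alpha)^j q^{-j^2-j}}{(1-\alpha)(q, \alpha a; q)_j}. \end{align*}
   Context: Throughout, $q$ is a complex number with $0<|q|<1$. For $x\in\mathbb{C}$ and an integer $n\ge 0$, $(x;q)_n=\prod_{k=0}^{n-1}(1-xq^k)$, and $(x_1,\dots,x_m;q)_n=(x_1;q)_n\cdots(x_m;q)_n$. The basic hypergeometric series is ${}_r\phi_s\Bigl({{a_1,\dots,a_r}\atop{b_1,\dots,b_s}};q,z\Bigr)=\sum_{n=0}^\infty \frac{(a_1,\dots,a_r;q)_n}{(q,b_1,\dots,b_s;q)_n}\bigl((-1)^nq^{n(n-1)/2}\bigr)^{1+s-r}z^n$ (here a lower parameter $0$ means $(0;q)_n=1$). *)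

theory Defs
  imports "HOL-Analysis.Analysis"
begin

definition qpoch :: "complex \<Rightarrow> complex \<Rightarrow> nat \<Rightarrow> complex" where
  "qpoch x q n = (\<Prod>k<n. (1 - x * q ^ k))"

definition qpochs :: "complex list \<Rightarrow> complex \<Rightarrow> nat \<Rightarrow> complex" where
  "qpochs xs q n = (\<Prod>x\<leftarrow>xs. qpoch x q n)"

definition bhs :: "complex list \<Rightarrow> complex list \<Rightarrow> complex \<Rightarrow> complex \<Rightarrow> complex" where
  "bhs as bs q z = (\<Sum>n. qpochs as q n / (qpoch q q n * qpochs bs q n)
      * ((-1) ^ n * q ^ (n * (n - 1) div 2)) powi (1 + int (length bs) - int (length as))
      * z ^ n)"

end

theory Submission
  imports Defs
begin

lemma qpoch_0 [simp]: "qpoch x q 0 = 1"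
  by (simp add: qpoch_def)

lemma qpoch_Suc: "qpoch x q (Suc k) = qpoch x q k * (1 - x * q ^ k)"
  by (simp add: qpoch_def)

lemma qpoch_shift: "qpoch (x * q) q k * (1 - x) = qpoch x q k * (1 - x * q ^ k)"
proof (induction k)
  case 0
  then show ?case by simp
next
  case (Suc k)
  have "qpoch (x * q) q (Suc k) * (1 - x) = (qpoch (x * q) q k * (1 - x)) * (1 - x * q * q ^ k)"
    by (simp add: qpoch_Suc algebra_simps)
  also have "\<dots> = qpoch x q k * (1 - x * q ^ k) * (1 - x * q ^ Suc k)"
    unfolding Suc.IH by (simp add: mult_ac)
  also have "\<dots> = qpoch x q (Suc k) * (1 - x * q ^ Suc k)"
    by (simp add: qpoch_Suc)
  finally show ?case .
qed

lemma qpoch_nonzero_mono: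
  assumes "qpoch x q m \<noteq> 0" "k \<le> m"
  shows "qpoch x q k \<noteq> 0"
  using assms unfolding qpoch_def by (auto simp: prod_zero_iff)

lemma qpoch_inv_zero:
  assumes "q \<noteq> 0" "N < k"
  shows "qpoch (inverse (q ^ N)) q k = 0"
proof -
  have "N \<in> {..<k}" using assms by simp
  moreover have "1 - inverse (q ^ N) * q ^ N = 0" using assms by simp
  ultimately show ?thesis unfolding qpoch_def by (auto simp: prod_zero_iff)
qed

lemma qpow_ne1:
  fixes q :: complex
  assumes "norm q < 1" "0 < m"
  shows "q ^ m \<noteq> 1"
proof
  assume "q ^ m = 1"
  then have "norm q ^ m = 1" by (metis norm_one norm_power)
  moreover have "norm q ^ m < 1" using assms by (simp add: power_less_one_iff)
  ultimately show False by simp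
qed

lemma qpoch_qq_nonzero:
  fixes q :: complex
  assumes "norm q < 1"
  shows "qpoch q q k \<noteq> 0"
proof -
  have "1 - q * q ^ i \<noteq> 0" for i
    using qpow_ne1[OF assms, of "Suc i"] by simp
  then show ?thesis unfolding qpoch_def by (auto simp: prod_zero_iff)
qed

lemma alg0:
  fixes q w \<alpha> a y :: complex
  assumes "a \<noteq> 0" "q * w \<noteq> 0" "q * w \<noteq> 1" "1 - \<alpha> * (q * w) \<noteq> 0"
  shows "(1 - \<alpha> * (q*w)) * (1 - q * (q*w) / a) * (1 - \<alpha>*(q*w)*y) * y
     - q * (q*w)^2 * (\<alpha>/a) * (1 - q*w) * (1 - \<alpha>*a*w) * (1 - \<alpha>*(q*w)) * (1 - inverse (q*w) * y) * y / (1 - inverse (q*w))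
   = - (q*w) * (1 - \<alpha>*(q*w)) * (1 - \<alpha>*(q*w)^2) * ((1 - inverse (q*w) * y) * (1 - \<alpha>*(q*w)*y) - (1 - q*y/a))"
proof -
  have h: "1 - inverse (q*w) \<noteq> 0" using assms by (metis inverse_1 inverse_inverse_eq right_minus_eq)
  show ?thesis using assms h by (simp add: field_simps) algebra
qed

lemma alg1:
  fixes q w x \<alpha> a y Pu Pv C :: complex
  assumes "a \<noteq> 0" "x \<noteq> 0" "x \<noteq> 1" "1 - \<alpha> * x \<noteq> 0" "C \<noteq> 0" "x = q * w"
  shows "(1 - \<alpha> * x) * (1 - q * x / a) * (Pu * (Pv * (1 - \<alpha> * x * y) / (1 - \<alpha> * x)) / C * y)
     - q * x ^ 2 * (\<alpha> / a) * (1 - x) * (1 - \<alpha> * a * w) * ((Pu * (1 - inverse x * y) / (1 - inverse x)) * Pv / C * y)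
   = (- x * (1 - \<alpha> * x) * (1 - \<alpha> * x ^ 2)) * Pu * (1 - inverse x * y) * Pv * (1 - \<alpha> * x * y) / ((1 - \<alpha> * x) * C)
     - (- x * (1 - \<alpha> * x) * (1 - \<alpha> * x ^ 2)) * Pu * Pv * (1 - q * y / a) / ((1 - \<alpha> * x) * C)"
proof -
  have h: "1 - inverse x \<noteq> 0" using assms by (metis inverse_1 inverse_inverse_eq right_minus_eq)
  define K where "K = Pu * Pv / ((1 - \<alpha> * x) * C)"
  have A: "(1 - \<alpha> * x) * (1 - q * x / a) * (1 - \<alpha>*x*y) * y
     - q * x^2 * (\<alpha>/a) * (1 - x) * (1 - \<alpha>*a*w) * (1 - \<alpha>*x) * (1 - inverse x * y) * y / (1 - inverse x)
   = - x * (1 - \<alpha>*x) * (1 - \<alpha>*x^2) * ((1 - inverse x * y) * (1 - \<alpha>*x*y) - (1 - q*y/a))"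
    using alg0[of a q w \<alpha> y] assms by simp
  have e1: "(1 - \<alpha> * x) * (1 - q * x / a) * (Pu * (Pv * (1 - \<alpha> * x * y) / (1 - \<alpha> * x)) / C * y)
     - q * x ^ 2 * (\<alpha> / a) * (1 - x) * (1 - \<alpha> * a * w) * ((Pu * (1 - inverse x * y) / (1 - inverse x)) * Pv / C * y)
     = K * ((1 - \<alpha> * x) * (1 - q * x / a) * (1 - \<alpha>*x*y) * y
     - q * x^2 * (\<alpha>/a) * (1 - x) * (1 - \<alpha>*a*w) * (1 - \<alpha>*x) * (1 - inverse x * y) * y / (1 - inverse x))"
    unfolding K_def using right_inverse[OF assms(4)] unfolding divide_inverse inverse_mult_distrib by algebra
  have e2: "(- x * (1 - \<alpha> * x) * (1 - \<alpha> * x ^ 2)) * Pu * (1 - inverse x * y) * Pv * (1 - \<alpha> * x * y) / ((1 - \<alpha> * x) * C)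
     - (- x * (1 - \<alpha> * x) * (1 - \<alpha> * x ^ 2)) * Pu * Pv * (1 - q * y / a) / ((1 - \<alpha> * x) * C)
     = K * (- x * (1 - \<alpha>*x) * (1 - \<alpha>*x^2) * ((1 - inverse x * y) * (1 - \<alpha>*x*y) - (1 - q*y/a)))"
    unfolding K_def unfolding K_def divide_inverse inverse_mult_distrib by (simp add: algebra_simps)
  show ?thesis unfolding e1 e2 A ..
qed

lemma qpoch_zero_left [simp]: "qpoch 0 q k = 1"
  by (simp add: qpoch_def)

lemma qpoch_Suc_nz:
  assumes "qpoch c q (Suc n) \<noteq> 0"
  shows "qpoch c q n \<noteq> 0" "1 - c * q ^ n \<noteq> 0"
  using assms by (auto simp: qpoch_Suc)

definition fterm :: "complex \<Rightarrow> complex \<Rightarrow> complex \<Rightarrow> nat \<Rightarrow> nat \<Rightarrow> complex" where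
  "fterm q \<alpha> a N k = qpoch (inverse (q ^ N)) q k * qpoch (\<alpha> * q ^ (N + 1)) q k / qpoch (q\<^sup>2 / a) q k * q ^ k"

definition gterm :: "complex \<Rightarrow> complex \<Rightarrow> complex \<Rightarrow> nat \<Rightarrow> nat \<Rightarrow> complex" where
  "gterm q \<alpha> a N k = (- (q ^ N) * (1 - \<alpha> * q ^ N) * (1 - \<alpha> * (q ^ N) ^ 2)) * qpoch (inverse (q ^ N)) q k
     * qpoch (\<alpha> * q ^ N) q k * (1 - q * q ^ k / a) / ((1 - \<alpha> * q ^ N) * qpoch (q\<^sup>2 / a) q k)"

lemma key:
  fixes q \<alpha> a :: complex
  assumes q0: "q \<noteq> 0" and q1: "norm q < 1" and a0: "a \<noteq> 0"
    and C0: "qpoch (q\<^sup>2 / a) q (Suc n) \<noteq> 0" and v1: "1 - \<alpha> * q ^ Suc n \<noteq> 0"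
    and k: "k \<le> Suc n"
  shows "(1 - \<alpha> * q ^ Suc n) * (1 - q * q ^ Suc n / a) * fterm q \<alpha> a (Suc n) k
     - q * (q ^ Suc n) ^ 2 * (\<alpha> / a) * (1 - q ^ Suc n) * (1 - \<alpha> * a * q ^ n) * fterm q \<alpha> a n k
     = gterm q \<alpha> a (Suc n) (Suc k) - gterm q \<alpha> a (Suc n) k"
proof -
  define x where "x = q ^ Suc n"
  define w where "w = q ^ n"
  define y where "y = q ^ k"
  define Pu where "Pu = qpoch (inverse x) q k"
  define Pv where "Pv = qpoch (\<alpha> * x) q k"
  define C where "C = qpoch (q\<^sup>2 / a) q k"
  have xw: "x = q * w" unfolding x_def w_def by simp
  have x0: "x \<noteq> 0" unfolding x_def using q0 by simp
  have x1: "x \<noteq> 1" unfolding x_def using qpow_ne1[OF q1, of "Suc n"] by simp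
  have C0': "C \<noteq> 0" unfolding C_def using qpoch_nonzero_mono[OF C0 k] .
  have v1': "1 - \<alpha> * x \<noteq> 0" using v1 unfolding x_def .
  have u1: "1 - inverse x \<noteq> 0" using x1 x0 by (metis inverse_1 inverse_inverse_eq right_minus_eq)
  have hf1: "fterm q \<alpha> a (Suc n) k = Pu * (Pv * (1 - \<alpha> * x * y) / (1 - \<alpha> * x)) / C * y"
  proof -
    have "qpoch ((\<alpha> * x) * q) q k * (1 - \<alpha> * x) = Pv * (1 - \<alpha> * x * y)"
      unfolding Pv_def y_def by (rule qpoch_shift)
    then have "qpoch ((\<alpha> * x) * q) q k = Pv * (1 - \<alpha> * x * y) / (1 - \<alpha> * x)"
      using v1' by (simp add: field_simps)
    moreover have "\<alpha> * q ^ (Suc n + 1) = (\<alpha> * x) * q" unfolding x_def by simp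
    ultimately have eq2: "qpoch (\<alpha> * q ^ (Suc n + 1)) q k = Pv * (1 - \<alpha> * x * y) / (1 - \<alpha> * x)" by (simp only:)
    show ?thesis unfolding fterm_def eq2 x_def[symmetric] Pu_def[symmetric] C_def[symmetric] y_def[symmetric] by simp
  qed
  have hf2: "fterm q \<alpha> a n k = (Pu * (1 - inverse x * y) / (1 - inverse x)) * Pv / C * y"
  proof -
    have "qpoch (inverse x * q) q k * (1 - inverse x) = Pu * (1 - inverse x * y)"
      unfolding Pu_def y_def by (rule qpoch_shift)
    then have "qpoch (inverse x * q) q k = Pu * (1 - inverse x * y) / (1 - inverse x)"
      using u1 by (simp add: field_simps)
    moreover have "inverse (q ^ n) = inverse x * q" unfolding x_def using q0 by (simp add: field_simps)
    moreover have "\<alpha> * q ^ (n + 1) = \<alpha> * x" unfolding x_def by simp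
    ultimately have eq2: "fterm q \<alpha> a n k = qpoch (inverse x * q) q k * qpoch (\<alpha> * x) q k / C * y"
      unfolding fterm_def C_def y_def by (simp only:)
    show ?thesis unfolding eq2 \<open>qpoch (inverse x * q) q k = _\<close> Pv_def[symmetric] ..
  qed
  define c where "c = - x * (1 - \<alpha> * x) * (1 - \<alpha> * x ^ 2)"
  have hg0: "gterm q \<alpha> a (Suc n) k = c * Pu * Pv * (1 - q * y / a) / ((1 - \<alpha> * x) * C)"
    unfolding gterm_def c_def Pu_def Pv_def C_def x_def y_def by simp
  have hg1: "gterm q \<alpha> a (Suc n) (Suc k) = c * Pu * (1 - inverse x * y) * Pv * (1 - \<alpha> * x * y) / ((1 - \<alpha> * x) * C)"
  proof (cases "k < Suc n")
    case True
    have "qpoch (q\<^sup>2 / a) q (Suc k) \<noteq> 0" using qpoch_nonzero_mono[OF C0] True by simp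
    then have d: "1 - q\<^sup>2 / a * y \<noteq> 0" unfolding y_def by (simp add: qpoch_Suc)
    have e: "1 - q * q ^ Suc k / a = 1 - q\<^sup>2 / a * y" unfolding y_def by (simp add: power2_eq_square)
    have "gterm q \<alpha> a (Suc n) (Suc k) = c * (Pu * (1 - inverse x * y)) * (Pv * (1 - \<alpha> * x * y)) * (1 - q\<^sup>2 / a * y)
        / ((1 - \<alpha> * x) * (C * (1 - q\<^sup>2 / a * y)))"
      unfolding gterm_def c_def Pu_def Pv_def C_def x_def[symmetric] y_def qpoch_Suc e by simp
    also have "\<dots> = c * (Pu * (1 - inverse x * y)) * (Pv * (1 - \<alpha> * x * y)) / ((1 - \<alpha> * x) * C)"
      using nonzero_mult_divide_mult_cancel_right[OF d, of "c * (Pu * (1 - inverse x * y)) * (Pv * (1 - \<alpha> * x * y))" "(1 - \<alpha> * x) * C"]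
      by (simp add: mult.assoc)
    also have "\<dots> = c * Pu * (1 - inverse x * y) * Pv * (1 - \<alpha> * x * y) / ((1 - \<alpha> * x) * C)"
      by (simp add: mult_ac)
    finally show ?thesis .
  next
    case False
    then have "k = Suc n" using k by simp
    then have z: "1 - inverse x * y = 0" unfolding x_def y_def using q0 by (simp add: field_simps)
    have "qpoch (inverse x) q (Suc k) = 0" using z unfolding qpoch_Suc y_def Pu_def by simp
    then show ?thesis using z unfolding gterm_def x_def by simp
  qed
  show ?thesis
    unfolding hf1 hf2 hg0 hg1 x_def[symmetric] w_def[symmetric] c_def
    using alg1[OF a0 x0 x1 v1' C0' xw, of Pu Pv y] by simp
qed


lemma lhs_rec:
  fixes q \<alpha> a :: complex
  assumes q0: "q \<noteq> 0" and q1: "norm q < 1" and a0: "a \<noteq> 0"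
    and C0: "qpoch (q\<^sup>2 / a) q (Suc n) \<noteq> 0" and v1: "1 - \<alpha> * q ^ Suc n \<noteq> 0"
  shows "(1 - \<alpha> * q ^ Suc n) * (1 - q * q ^ Suc n / a) * (\<Sum>k<Suc (Suc n). fterm q \<alpha> a (Suc n) k)
     - q * (q ^ Suc n) ^ 2 * (\<alpha> / a) * (1 - q ^ Suc n) * (1 - \<alpha> * a * q ^ n) * (\<Sum>k<Suc n. fterm q \<alpha> a n k)
     = q ^ Suc n * (1 - \<alpha> * (q ^ Suc n) ^ 2) * (1 - q / a)"
proof -
  define D where "D = (1 - \<alpha> * q ^ Suc n) * (1 - q * q ^ Suc n / a)"
  define E where "E = q * (q ^ Suc n) ^ 2 * (\<alpha> / a) * (1 - q ^ Suc n) * (1 - \<alpha> * a * q ^ n)"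
  have z: "fterm q \<alpha> a n (Suc n) = 0"
    unfolding fterm_def using qpoch_inv_zero[OF q0, of n "Suc n"] by simp
  have s2: "(\<Sum>k<Suc (Suc n). fterm q \<alpha> a n k) = (\<Sum>k<Suc n. fterm q \<alpha> a n k)"
    using z by simp
  have "D * (\<Sum>k<Suc (Suc n). fterm q \<alpha> a (Suc n) k) - E * (\<Sum>k<Suc (Suc n). fterm q \<alpha> a n k)
      = (\<Sum>k<Suc (Suc n). D * fterm q \<alpha> a (Suc n) k - E * fterm q \<alpha> a n k)"
    unfolding sum_subtractf sum_distrib_left ..
  also have "\<dots> = (\<Sum>k<Suc (Suc n). gterm q \<alpha> a (Suc n) (Suc k) - gterm q \<alpha> a (Suc n) k)"
    apply (rule sum.cong[OF refl])
    unfolding D_def E_def using key[OF q0 q1 a0 C0 v1] by simp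
  also have "\<dots> = gterm q \<alpha> a (Suc n) (Suc (Suc n)) - gterm q \<alpha> a (Suc n) 0"
    by (rule sum_lessThan_telescope)
  also have "gterm q \<alpha> a (Suc n) (Suc (Suc n)) = 0"
    unfolding gterm_def using qpoch_inv_zero[OF q0, of "Suc n" "Suc (Suc n)"] by simp
  also have "gterm q \<alpha> a (Suc n) 0 = - (q ^ Suc n * (1 - \<alpha> * (q ^ Suc n) ^ 2) * (1 - q / a))"
    unfolding gterm_def using v1 a0 by (simp add: field_simps)
  finally show ?thesis unfolding D_def E_def s2 by simp
qed

lemma bhs_eq:
  fixes q \<alpha> a :: complex
  assumes q0: "q \<noteq> 0" and q1: "norm q < 1"
  shows "bhs [inverse (q ^ n), \<alpha> * q ^ (n + 1), q] [q\<^sup>2 / a, 0] q q = (\<Sum>k<Suc n. fterm q \<alpha> a n k)"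
proof -
  have t: "qpochs [inverse (q ^ n), \<alpha> * q ^ (n + 1), q] q k / (qpoch q q k * qpochs [q\<^sup>2 / a, 0] q k)
      * ((-1) ^ k * q ^ (k * (k - 1) div 2)) powi (1 + int (length [q\<^sup>2 / a, 0]) - int (length [inverse (q ^ n), \<alpha> * q ^ (n + 1), q]))
      * q ^ k = fterm q \<alpha> a n k" for k
  proof -
    have nz: "qpoch q q k \<noteq> 0" by (rule qpoch_qq_nonzero[OF q1])
    show ?thesis
      unfolding fterm_def qpochs_def using nz
      by (cases "qpoch (q\<^sup>2 / a) q k = 0") (simp_all add: field_simps)
  qed
  show ?thesis
    unfolding bhs_def t
  proof (rule suminf_finite)
    show "finite {..<Suc n}" by simp
    show "fterm q \<alpha> a n k = 0" if "k \<notin> {..<Suc n}" for k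
      unfolding fterm_def using qpoch_inv_zero[OF q0, of n k] that by simp
  qed
qed


definition Cfac :: "complex \<Rightarrow> complex \<Rightarrow> complex \<Rightarrow> nat \<Rightarrow> complex" where
  "Cfac q \<alpha> a n = q ^ (n\<^sup>2 + 2 * n) * (qpochs [q, \<alpha> * a] q n / qpochs [q * \<alpha>, q\<^sup>2 / a] q n) * (\<alpha> / a) ^ n"

definition tt :: "complex \<Rightarrow> complex \<Rightarrow> complex \<Rightarrow> nat \<Rightarrow> complex" where
  "tt q \<alpha> a j = (1 - \<alpha> * q ^ (2 * j)) * qpochs [\<alpha>, q / a] q j * (a / \<alpha>) ^ j
           * inverse (q ^ (j\<^sup>2 + j)) / ((1 - \<alpha>) * qpochs [q, \<alpha> * a] q j)"

lemma pw1: "(q::complex) ^ ((Suc n)\<^sup>2 + 2 * Suc n) = q ^ (n\<^sup>2 + 2 * n) * (q ^ 3 * (q ^ n) ^ 2)"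
proof -
  have e: "(Suc n)\<^sup>2 + 2 * Suc n = (n\<^sup>2 + 2 * n) + (3 + n * 2)" by (simp add: power2_eq_square)
  have "q ^ ((Suc n)\<^sup>2 + 2 * Suc n) = q ^ (n\<^sup>2 + 2 * n) * q ^ (3 + n * 2)"
    unfolding e by (rule power_add)
  also have "q ^ (3 + n * 2) = q ^ 3 * (q ^ n) ^ 2" by (simp only: power_add power_mult)
  finally show ?thesis .
qed

lemma alg_r1g:
  fixes d1 d2 z P Qn An Bn Cn E1 E2 r \<beta> :: complex
  assumes "Bn \<noteq> 0" "Cn \<noteq> 0" "d1 \<noteq> 0" "d2 \<noteq> 0"
  shows "d1 * d2 * ((z * P) * ((Qn * E1) * (An * E2) / ((Bn * d1) * (Cn * d2))) * (r * \<beta>))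
    = P * \<beta> * E1 * E2 * (z * (Qn * An / (Bn * Cn)) * r)"
  using assms by (simp add: field_simps)

lemma alg_r1:
  fixes q \<alpha> a z Qn An Bn Cn w r :: complex
  assumes "Bn \<noteq> 0" "Cn \<noteq> 0" "1 - q * \<alpha> * w \<noteq> 0" "1 - q\<^sup>2 / a * w \<noteq> 0" "a \<noteq> 0"
  shows "(1 - \<alpha> * (q * w)) * (1 - q * (q * w) / a) * ((z * (q ^ 3 * w ^ 2)) * ((Qn * (1 - q * w)) * (An * (1 - \<alpha> * a * w))
      / ((Bn * (1 - q * \<alpha> * w)) * (Cn * (1 - q\<^sup>2 / a * w)))) * (r * (\<alpha> / a)))
    = q * (q * w) ^ 2 * (\<alpha> / a) * (1 - q * w) * (1 - \<alpha> * a * w) * (z * (Qn * An / (Bn * Cn)) * r)"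
proof -
  have e1: "1 - \<alpha> * (q * w) = 1 - q * \<alpha> * w" by (simp add: mult_ac)
  have e2: "1 - q * (q * w) / a = 1 - q\<^sup>2 / a * w" by (simp add: power2_eq_square)
  have e3: "q * (q * w) ^ 2 = q ^ 3 * w ^ 2" by (simp add: power2_eq_square power3_eq_cube)
  show ?thesis unfolding e1 e2 e3 by (rule alg_r1g[OF assms(1-4)])
qed

lemma rhs_rec1:
  fixes q \<alpha> a :: complex
  assumes q0: "q \<noteq> 0" and a0: "a \<noteq> 0"
    and B0: "qpoch (q * \<alpha>) q (Suc n) \<noteq> 0" and C0: "qpoch (q\<^sup>2 / a) q (Suc n) \<noteq> 0"
  shows "(1 - \<alpha> * q ^ Suc n) * (1 - q * q ^ Suc n / a) * Cfac q \<alpha> a (Suc n)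
     = q * (q ^ Suc n) ^ 2 * (\<alpha> / a) * (1 - q ^ Suc n) * (1 - \<alpha> * a * q ^ n) * Cfac q \<alpha> a n"
proof -
  note B = qpoch_Suc_nz[OF B0] and C = qpoch_Suc_nz[OF C0]
  show ?thesis
    unfolding Cfac_def qpochs_def list.map prod_list.Cons prod_list.Nil mult_1_right qpoch_Suc pw1 power_Suc2[of "\<alpha> / a"] power_Suc[of q]
    by (rule alg_r1[OF B(1) C(1) _ _ a0]) (use B(2) C(2) in simp_all)
qed


lemma alg_r2:
  fixes b d1 d2 z1 z2 Q A QA QC Pa Pb r s x \<alpha> q a :: complex
  assumes hA: "QA * (1 - \<alpha>) = Pa * d1" and hC: "QC * b = Pb * d2"
    and rs: "r * s = 1" and zz: "z1 * z2 = x"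
    and nz: "Q \<noteq> 0" "A \<noteq> 0" "QA \<noteq> 0" "QC \<noteq> 0" "1 - \<alpha> \<noteq> 0"
  shows "d1 * d2 * (z1 * (Q * A / (QA * QC)) * r) * ((1 - \<alpha> * x\<^sup>2) * (Pa * Pb) * s * z2 / ((1 - \<alpha>) * (Q * A)))
     = x * (1 - \<alpha> * x\<^sup>2) * b"
proof -
  have "d1 * d2 * (z1 * (Q * A / (QA * QC)) * r) * ((1 - \<alpha> * x\<^sup>2) * (Pa * Pb) * s * z2 / ((1 - \<alpha>) * (Q * A)))
     = (Pa * d1) * (Pb * d2) * (z1 * z2) * (r * s) * (1 - \<alpha> * x\<^sup>2) / (QA * QC * (1 - \<alpha>))"
    using nz by (simp add: field_simps)
  also have "\<dots> = (QA * (1 - \<alpha>)) * (QC * b) * x * (1 - \<alpha> * x\<^sup>2) / (QA * QC * (1 - \<alpha>))"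
    unfolding hA[symmetric] hC[symmetric] rs zz by simp
  also have "\<dots> = x * (1 - \<alpha> * x\<^sup>2) * b"
    using nz by (simp add: field_simps)
  finally show ?thesis .
qed

lemma rhs_rec2:
  fixes q \<alpha> a :: complex
  assumes q0: "q \<noteq> 0" and q1: "norm q < 1" and a0: "a \<noteq> 0" and al0: "\<alpha> \<noteq> 0" and al1: "\<alpha> \<noteq> 1"
    and B0: "qpoch (q * \<alpha>) q N \<noteq> 0" and C0: "qpoch (q\<^sup>2 / a) q N \<noteq> 0"
    and A0: "qpoch (\<alpha> * a) q N \<noteq> 0"
  shows "(1 - \<alpha> * q ^ N) * (1 - q * q ^ N / a) * Cfac q \<alpha> a N * tt q \<alpha> a N
     = q ^ N * (1 - \<alpha> * (q ^ N) ^ 2) * (1 - q / a)"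
proof -
  have hA: "qpoch (q * \<alpha>) q N * (1 - \<alpha>) = qpoch \<alpha> q N * (1 - \<alpha> * q ^ N)"
    using qpoch_shift[of \<alpha> q N] by (simp add: mult.commute)
  have hC: "qpoch (q\<^sup>2 / a) q N * (1 - q / a) = qpoch (q / a) q N * (1 - q * q ^ N / a)"
  proof -
    have e: "q / a * q = q\<^sup>2 / a" by (simp add: power2_eq_square)
    have f: "q / a * q ^ N = q * q ^ N / a" by simp
    show ?thesis using qpoch_shift[of "q / a" q N] unfolding e f .
  qed
  have rs: "(\<alpha> / a) ^ N * (a / \<alpha>) ^ N = 1"
    using a0 al0 by (simp add: power_mult_distrib[symmetric])
  have zz: "q ^ (N\<^sup>2 + 2 * N) * inverse (q ^ (N\<^sup>2 + N)) = q ^ N"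
  proof -
    have e: "N\<^sup>2 + 2 * N = (N\<^sup>2 + N) + N" by simp
    have "q ^ (N\<^sup>2 + 2 * N) = q ^ (N\<^sup>2 + N) * q ^ N" unfolding e by (rule power_add)
    then show ?thesis using q0 by simp
  qed
  have p2: "q ^ (2 * N) = (q ^ N)\<^sup>2" by (metis mult.commute power_mult)
  have Q: "qpoch q q N \<noteq> 0" by (rule qpoch_qq_nonzero[OF q1])
  have a1: "1 - \<alpha> \<noteq> 0" using al1 by simp
  show ?thesis
    unfolding Cfac_def tt_def qpochs_def list.map prod_list.Cons prod_list.Nil mult_1_right p2 divide_inverse[of _ "(1 - \<alpha>) * _"]
    using alg_r2[OF hA hC rs zz Q A0 B0 C0 a1] by (simp add: divide_inverse)
qed

theorem theorem2p6:
  fixes q \<alpha> a :: complex and n :: nat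
  assumes "0 < norm q" "norm q < 1"
    and "a \<noteq> 0" "\<alpha> \<noteq> 0" "\<alpha> \<noteq> 1"
    and "qpoch (q\<^sup>2 / a) q n \<noteq> 0"
    and "qpoch (q * \<alpha>) q n \<noteq> 0"
    and "qpoch (\<alpha> * a) q n \<noteq> 0"
  shows "bhs [inverse (q ^ n), \<alpha> * q ^ (n + 1), q] [q\<^sup>2 / a, 0] q q =
    q ^ (n\<^sup>2 + 2 * n) * (qpochs [q, \<alpha> * a] q n / qpochs [q * \<alpha>, q\<^sup>2 / a] q n)
      * (\<alpha> / a) ^ n
      * (\<Sum>j = 0..n. (1 - \<alpha> * q ^ (2 * j)) * qpochs [\<alpha>, q / a] q j * (a / \<alpha>) ^ j
           * inverse (q ^ (j\<^sup>2 + j)) / ((1 - \<alpha>) * qpochs [q, \<alpha> * a] q j))"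
proof -
  have q0: "q \<noteq> 0" using assms(1) by auto
  have main: "(\<Sum>k<Suc m. fterm q \<alpha> a m k) = Cfac q \<alpha> a m * (\<Sum>j = 0..m. tt q \<alpha> a j)"
    if "qpoch (q\<^sup>2 / a) q m \<noteq> 0" "qpoch (q * \<alpha>) q m \<noteq> 0" "qpoch (\<alpha> * a) q m \<noteq> 0" for m
    using that
  proof (induction m)
    case 0
    then show ?case using assms(5) by (simp add: fterm_def Cfac_def tt_def qpochs_def)
  next
    case (Suc n)
    note C = qpoch_Suc_nz[OF Suc.prems(1)] and B = qpoch_Suc_nz[OF Suc.prems(2)]
      and A = qpoch_Suc_nz[OF Suc.prems(3)]
    have IH: "(\<Sum>k<Suc n. fterm q \<alpha> a n k) = Cfac q \<alpha> a n * (\<Sum>j = 0..n. tt q \<alpha> a j)"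
      using Suc.IH C(1) B(1) A(1) by blast
    have v1: "1 - \<alpha> * q ^ Suc n \<noteq> 0" using B(2) by (simp add: mult_ac)
    have d2: "1 - q * q ^ Suc n / a \<noteq> 0" using C(2) by (simp add: power2_eq_square mult_ac)
    define D where "D = (1 - \<alpha> * q ^ Suc n) * (1 - q * q ^ Suc n / a)"
    define E where "E = q * (q ^ Suc n) ^ 2 * (\<alpha> / a) * (1 - q ^ Suc n) * (1 - \<alpha> * a * q ^ n)"
    define c where "c = q ^ Suc n * (1 - \<alpha> * (q ^ Suc n) ^ 2) * (1 - q / a)"
    have D0: "D \<noteq> 0" unfolding D_def using v1 d2 by simp
    have L: "D * (\<Sum>k<Suc (Suc n). fterm q \<alpha> a (Suc n) k) - E * (\<Sum>k<Suc n. fterm q \<alpha> a n k) = c"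
      unfolding D_def E_def c_def by (rule lhs_rec[OF q0 assms(2,3) Suc.prems(1) v1])
    have R1: "D * Cfac q \<alpha> a (Suc n) = E * Cfac q \<alpha> a n"
      unfolding D_def E_def by (rule rhs_rec1[OF q0 assms(3) Suc.prems(2,1)])
    have R2: "D * Cfac q \<alpha> a (Suc n) * tt q \<alpha> a (Suc n) = c"
      unfolding D_def c_def by (rule rhs_rec2[OF q0 assms(2,3,4,5) Suc.prems(2,1,3)])
    define S1 where "S1 = (\<Sum>k<Suc (Suc n). fterm q \<alpha> a (Suc n) k)"
    define S0 where "S0 = (\<Sum>k<Suc n. fterm q \<alpha> a n k)"
    define T0 where "T0 = (\<Sum>j = 0..n. tt q \<alpha> a j)"
    have T1: "(\<Sum>j = 0..Suc n. tt q \<alpha> a j) = T0 + tt q \<alpha> a (Suc n)" unfolding T0_def by simp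
    have "D * S1 = E * (Cfac q \<alpha> a n * T0) + c"
      using L IH unfolding S1_def[symmetric] S0_def[symmetric] T0_def[symmetric] by (simp add: algebra_simps)
    also have "\<dots> = D * (Cfac q \<alpha> a (Suc n) * (T0 + tt q \<alpha> a (Suc n)))"
    proof -
      have X: "D * (Cfac q \<alpha> a (Suc n) * (T0 + tt q \<alpha> a (Suc n)))
          = (D * Cfac q \<alpha> a (Suc n)) * T0 + D * Cfac q \<alpha> a (Suc n) * tt q \<alpha> a (Suc n)"
        by (simp add: algebra_simps)
      show ?thesis by (subst X, subst R2, subst R1, simp add: mult_ac)
    qed
    finally show ?case using D0 unfolding S1_def[symmetric] T1 by simp
  qed
  show ?thesis
    unfolding bhs_eq[OF q0 assms(2)] main[OF assms(6,7,8)] Cfac_def tt_def ..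
qed

end
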